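(* Let $V$ be a finite-dimensional vector space over a field of characteristic different from $2$ and $b$ a non-degenerate symmetric or alternating bilinear form on $V$. Let $\mathcal{V}$ be a linear subspace of $\mathcal{A}_b$ all of whose elements are nilpotent. Let $x\in V\setminus\{0\}$, $u\in\mathcal{V}$ and $y\in V$ be such that $x\wedge_b y\in\mathcal{V}$. Then $b(u(x),y)=0$.
   Context: An endomorphism $u$ is $b$-alternating if $(x,y)\mapsto b(x,u(y))$ is alternating (vanishes on all $(x,x)$); $\mathcal{A}_b$ is the space of these. For $x,y\in V$, $x\wedge_b y$ is the endomorphism $z\mapsto b(y,z)\,x-b(x,z)\,y$. *)

theory Defs
  imports "HOL-Analysis.Analysis"
begin

text \<open>Finite-dimensional vector spaces over a field 'k are modelled as 'k^'n.\<close>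

definition bilinear_form :: "('k::field^'n \<Rightarrow> 'k^'n \<Rightarrow> 'k) \<Rightarrow> bool" where
  "bilinear_form b \<longleftrightarrow>
     (\<forall>y. Vector_Spaces.linear (*s) (*) (\<lambda>x. b x y)) \<and>
     (\<forall>x. Vector_Spaces.linear (*s) (*) (\<lambda>y. b x y))"

definition symmetric_form :: "('k::field^'n \<Rightarrow> 'k^'n \<Rightarrow> 'k) \<Rightarrow> bool" where
  "symmetric_form b \<longleftrightarrow> (\<forall>x y. b x y = b y x)"

definition alternating_form :: "('k::field^'n \<Rightarrow> 'k^'n \<Rightarrow> 'k) \<Rightarrow> bool" where
  "alternating_form b \<longleftrightarrow> (\<forall>x. b x x = 0)"

definition nondegenerate_form :: "('k::field^'n \<Rightarrow> 'k^'n \<Rightarrow> 'k) \<Rightarrow> bool" where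
  "nondegenerate_form b \<longleftrightarrow> (\<forall>x. (\<forall>y. b x y = 0) \<longrightarrow> x = 0)"

text \<open>u is b-alternating: u is an endomorphism and (x,y) |-> b x (u y) is alternating.\<close>
definition b_alternating :: "('k::field^'n \<Rightarrow> 'k^'n \<Rightarrow> 'k) \<Rightarrow> ('k^'n \<Rightarrow> 'k^'n) \<Rightarrow> bool" where
  "b_alternating b u \<longleftrightarrow> Vector_Spaces.linear (*s) (*s) u \<and> (\<forall>x. b x (u x) = 0)"

definition A_b :: "('k::field^'n \<Rightarrow> 'k^'n \<Rightarrow> 'k) \<Rightarrow> ('k^'n \<Rightarrow> 'k^'n) set" where
  "A_b b = {u. b_alternating b u}"

definition wedge_b :: "('k::field^'n \<Rightarrow> 'k^'n \<Rightarrow> 'k) \<Rightarrow> 'k^'n \<Rightarrow> 'k^'n \<Rightarrow> ('k^'n \<Rightarrow> 'k^'n)" where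
  "wedge_b b x y = (\<lambda>z. b y z *s x - b x z *s y)"

text \<open>Linear subspace of the space of endomorphisms (pointwise operations).\<close>
definition endo_subspace :: "('k::field^'n \<Rightarrow> 'k^'n) set \<Rightarrow> bool" where
  "endo_subspace S \<longleftrightarrow> (\<lambda>_. 0) \<in> S \<and>
     (\<forall>u\<in>S. \<forall>v\<in>S. (\<lambda>z. u z + v z) \<in> S) \<and>
     (\<forall>c. \<forall>u\<in>S. (\<lambda>z. c *s u z) \<in> S)"

definition nilpotent_endo :: "('k::field^'n \<Rightarrow> 'k^'n) \<Rightarrow> bool" where
  "nilpotent_endo u \<longleftrightarrow> (\<exists>m. u ^^ m = (\<lambda>_. 0))"

end

theory Submission imports Defs "HOL-Analysis.Analysis" "HOL-Computational_Algebra.Polynomial" begin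

lemma coeff_mult01:
  fixes a b :: "'k::comm_ring_1 poly"
  shows "coeff (a*b) 0 = coeff a 0 * coeff b 0"
    "coeff (a*b) 1 = coeff a 0 * coeff b 1 + coeff a 1 * coeff b 0"
  by (simp_all add: coeff_mult atMost_Suc)

lemma prod_perm_coeff1:
  fixes g :: "'n::finite \<Rightarrow> 'n \<Rightarrow> 'k::field poly"
  assumes g0: "\<And>i j. i \<noteq> j \<Longrightarrow> coeff (g i j) 0 = 0"
    and pp: "p permutes (UNIV::'n set)" and pid: "p \<noteq> id"
  shows "coeff (\<Prod>i\<in>UNIV. g i (p i)) 1 = 0"
proof -
  obtain i where i: "p i \<noteq> i" using pid by (auto simp: fun_eq_iff)
  have pi: "p (p i) \<noteq> p i" using i pp by (metis permutes_inj injD)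
  have "(\<Prod>i\<in>UNIV. g i (p i)) = g i (p i) * (\<Prod>k\<in>UNIV-{i}. g k (p k))"
    by (simp add: prod.remove)
  also have "(\<Prod>k\<in>UNIV-{i}. g k (p k)) = g (p i) (p (p i)) * (\<Prod>k\<in>UNIV-{i}-{p i}. g k (p k))"
    using i by (subst prod.remove[of _ "p i"]) auto
  finally have e: "(\<Prod>i\<in>UNIV. g i (p i)) = (g i (p i) * g (p i) (p (p i))) * (\<Prod>k\<in>UNIV-{i}-{p i}. g k (p k))"
    by (simp add: mult.assoc)
  have a: "coeff (g i (p i)) 0 = 0" using g0 i by metis
  have b: "coeff (g (p i) (p (p i))) 0 = 0" using g0 pi by metis
  show ?thesis unfolding e coeff_mult01 using a b by simp
qed

lemma prod_lin_coeff:
  fixes c :: "'a \<Rightarrow> 'k::field"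
  assumes "finite F"
  shows "coeff (\<Prod>i\<in>F. [:1, c i:]) 0 = 1 \<and> coeff (\<Prod>i\<in>F. [:1, c i:]) 1 = sum c F"
  using assms
proof (induction F rule: finite_induct)
  case empty then show ?case by simp
next
  case (insert x F)
  then show ?case by (simp add: coeff_pCons)
qed

lemma nilp_trace:
  fixes A :: "'k::field^'n^'n" and F :: "nat \<Rightarrow> 'k^'n^'n"
  assumes F0: "F 0 = mat 1" and FS: "\<And>k. F (Suc k) = A ** F k" and Fm: "F m = 0"
  shows "trace A = 0"
proof -
  define P :: "'k poly^'n^'n" where "P = (\<chi> i j. [:(if i = j then 1 else 0), - A$i$j:])"
  define Q :: "'k poly^'n^'n" where "Q = (\<chi> i j. \<Sum>k<m. monom (F k $ i $ j) k)"
  define g where "g = (\<lambda>i j k. monom (F k $ i $ j) k)"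
  have PQ: "P ** Q = mat 1"
  proof -
    have "(P ** Q) $ i $ j = (mat 1 :: 'k poly^'n^'n) $ i $ j" for i j
    proof -
      have Pe: "P $ i $ l = (if i = l then 1 else 0) - monom (A$i$l) 1" for l
        unfolding P_def by (simp add: monom_altdef one_pCons)
      have "(P ** Q) $ i $ j = (\<Sum>l\<in>UNIV. P $ i $ l * Q $ l $ j)"
        by (simp add: matrix_matrix_mult_def)
      also have "\<dots> = (\<Sum>l\<in>UNIV. (if i = l then 1 else 0) * Q $ l $ j)
            - (\<Sum>l\<in>UNIV. monom (A$i$l) 1 * Q $ l $ j)"
        by (simp add: Pe algebra_simps sum_subtractf)
      also have "(\<Sum>l\<in>UNIV. (if i = l then 1 else 0) * Q $ l $ j) = Q $ i $ j"
        by (simp add: if_distrib[of "\<lambda>c. c * Q $ _ $ j"] cong: if_cong)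
      also have "(\<Sum>l\<in>UNIV. monom (A$i$l) 1 * Q $ l $ j)
          = (\<Sum>k<m. \<Sum>l\<in>UNIV. monom (A$i$l * F k $ l $ j) (Suc k))"
        unfolding Q_def by (simp add: sum_distrib_left mult_monom sum.swap[of _ UNIV])
      also have "\<dots> = (\<Sum>k<m. monom (F (Suc k) $ i $ j) (Suc k))"
        by (simp add: FS matrix_matrix_mult_def monom_sum)
      also have "Q $ i $ j - (\<Sum>k<m. monom (F (Suc k) $ i $ j) (Suc k)) = g i j 0 - g i j m"
        unfolding Q_def g_def using sum_lessThan_telescope'[of "\<lambda>k. monom (F k $ i $ j) k" m] by (simp add: sum_subtractf)
      also have "\<dots> = (mat 1 :: 'k poly^'n^'n) $ i $ j"
        by (simp add: g_def F0 Fm mat_def)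
      finally show ?thesis .
    qed
    then show ?thesis by (simp add: vec_eq_iff)
  qed
  have "det P * det Q = 1" using det_mul[of P Q] PQ by simp
  then have "det P dvd 1" by (metis dvdI)
  then obtain c where c: "det P = [:c:]" by (auto simp: is_unit_poly_iff)
  have g0: "\<And>i j. i \<noteq> j \<Longrightarrow> coeff (P $ i $ j) 0 = 0" by (simp add: P_def)
  have "coeff (det P) 1 = (\<Sum>p\<in>{p. p permutes UNIV}. of_int (sign p) * coeff (\<Prod>i\<in>UNIV. P$i$p i) 1)"
    by (simp add: det_def coeff_sum of_int_poly)
  also have "\<dots> = of_int (sign (id::'n\<Rightarrow>'n)) * coeff (\<Prod>i\<in>UNIV. P$i$id i) 1"
  proof -
    have fin: "finite {p::'n\<Rightarrow>'n. p permutes UNIV}" by (simp add: finite_permutations)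
    have idm: "id \<in> {p::'n\<Rightarrow>'n. p permutes UNIV}" by (simp add: permutes_id)
    have z: "(\<Sum>p\<in>{p. p permutes UNIV} - {id}. of_int (sign p) * coeff (\<Prod>i\<in>UNIV. P$i$p i) 1) = (0::'k)"
      using prod_perm_coeff1[of "\<lambda>i j. P$i$j", OF g0] by (intro sum.neutral) auto
    show ?thesis using z by (simp add: sum.remove[OF fin idm])
  qed
  also have "\<dots> = coeff (\<Prod>i\<in>UNIV. [:1, - A$i$i:]) 1"
    by (simp add: sign_id P_def)
  also have "\<dots> = - trace A"
    using prod_lin_coeff[of UNIV "\<lambda>i. - A$i$i"] by (simp add: trace_def sum_negf)
  finally show ?thesis using c by simp
qed

lemma lin_pow: "Vector_Spaces.linear (*s) (*s) (f::'k::field^'n \<Rightarrow> 'k^'n) \<Longrightarrow> Vector_Spaces.linear (*s) (*s) (f^^k)"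
  by (induction k) (auto intro: Vector_Spaces.linear_compose vec.linear_id)

lemma trace_nilp_endo:
  fixes f :: "'k::field^'n \<Rightarrow> 'k^'n"
  assumes lf: "Vector_Spaces.linear (*s) (*s) f" and fm: "f^^m = (\<lambda>_. 0)"
  shows "(\<Sum>i\<in>UNIV. f (axis i 1) $ i) = 0"
proof -
  have "trace (matrix f) = 0"
  proof (rule nilp_trace[where F="\<lambda>k. matrix (f^^k)" and m=m])
    show "matrix (f^^0) = mat 1" by (simp add: matrix_id_mat_1)
    show "matrix (f^^Suc k) = matrix f ** matrix (f^^k)" for k
      using matrix_compose_gen[OF lin_pow[OF lf, of k] lf] by simp
    show "matrix (f^^m) = 0" by (simp add: fm matrix_def vec_eq_iff)
  qed
  then show ?thesis by (simp add: trace_def matrix_def)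
qed

lemma lin_fun_expand:
  fixes \<phi> :: "'k::field^'n \<Rightarrow> 'k"
  assumes "Vector_Spaces.linear (*s) (*) \<phi>"
  shows "\<phi> z = (\<Sum>i\<in>UNIV. z$i * \<phi> (axis i 1))"
proof -
  interpret L: Vector_Spaces.linear "(*s)" "(*)" \<phi> by fact
  have "\<phi> z = \<phi> (\<Sum>i\<in>UNIV. z$i *s axis i 1)" by (simp add: basis_expansion)
  also have "\<dots> = (\<Sum>i\<in>UNIV. z$i * \<phi> (axis i 1))" by (simp add: L.sum L.scale)
  finally show ?thesis .
qed

lemma lin_add: "Vector_Spaces.linear s1 s2 f \<Longrightarrow> f (x + y) = f x + f y"
  by (simp add: Vector_Spaces.linear_iff)
lemma lin_scale: "Vector_Spaces.linear s1 s2 f \<Longrightarrow> f (s1 c x) = s2 c (f x)"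
  by (simp add: Vector_Spaces.linear_iff)
lemma lin_diff: "Vector_Spaces.linear s1 s2 f \<Longrightarrow> f (x - y) = f x - f y"
proof -
  assume "Vector_Spaces.linear s1 s2 f"
  then interpret Vector_Spaces.linear s1 s2 f .
  show ?thesis by (rule diff)
qed

theorem mainTheorem12:
  fixes b :: "'k::field^'n \<Rightarrow> 'k^'n \<Rightarrow> 'k"
    and S :: "('k^'n \<Rightarrow> 'k^'n) set"
    and x y :: "'k^'n" and u :: "'k^'n \<Rightarrow> 'k^'n"
  assumes char: "(2::'k) \<noteq> 0"
    and bil: "bilinear_form b"
    and symalt: "symmetric_form b \<or> alternating_form b"
    and nondeg: "nondegenerate_form b"
    and sub: "endo_subspace S"
    and SA: "S \<subseteq> A_b b"
    and nil: "\<forall>v\<in>S. nilpotent_endo v"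
    and x0: "x \<noteq> 0"
    and uS: "u \<in> S"
    and wS: "wedge_b b x y \<in> S"
  shows "b (u x) y = 0"
proof -
  define w where "w = wedge_b b x y"
  define v where "v = (\<lambda>z. u z + w z)"
  have vS: "v \<in> S" using sub uS wS unfolding endo_subspace_def v_def w_def by blast
  have L1: "Vector_Spaces.linear (*s) (*) (\<lambda>x. b x z)" for z using bil by (simp add: bilinear_form_def)
  have L2: "Vector_Spaces.linear (*s) (*) (\<lambda>z. b x z)" for x using bil by (simp add: bilinear_form_def)
  have b1: "b (p + q) z = b p z + b q z" "b (c *s p) z = c * b p z" for p q z c
    using lin_add[OF L1] lin_scale[OF L1] by auto
  have b2: "b z (p + q) = b z p + b z q" "b z (c *s p) = c * b z p" for p q z c
    using lin_add[OF L2] lin_scale[OF L2] by auto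
  have lu: "Vector_Spaces.linear (*s) (*s) u" and bu: "\<And>z. b z (u z) = 0"
    using SA uS by (auto simp: A_b_def b_alternating_def)
  have uadd: "u (p + q) = u p + u q" "u (c *s p) = c *s u p" for p q c
    using lin_add[OF lu] lin_scale[OF lu] by auto
  have lw: "Vector_Spaces.linear (*s) (*s) w"
    using lu unfolding w_def wedge_b_def Vector_Spaces.linear_iff
    by (auto simp: b2 algebra_simps)
  have wadd: "w (p + q) = w p + w q" for p q
    using lin_add[OF lw] by auto
  have nilp: "\<exists>m. f^^m = (\<lambda>_. 0)" if "f \<in> S" for f using nil that by (auto simp: nilpotent_endo_def)
  have sq: "(f \<circ> f)^^m = (\<lambda>_. 0)" if "f^^m = (\<lambda>_. 0)" for f :: "'k^'n \<Rightarrow> 'k^'n" and m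
  proof -
    have "(f \<circ> f)^^m = (f^^2)^^m" by (simp add: numeral_2_eq_2)
    also have "\<dots> = (f^^m)^^2" by (simp add: funpow_mult mult.commute)
    finally show ?thesis using that by (simp add: numeral_2_eq_2)
  qed
  have tr0: "(\<Sum>i\<in>UNIV. f (f (axis i 1)) $ i) = 0" if fS: "f \<in> S" and fl: "Vector_Spaces.linear (*s) (*s) f" for f
  proof -
    obtain m where "f^^m = (\<lambda>_. 0)" using nilp[OF fS] by blast
    then show ?thesis using trace_nilp_endo[OF Vector_Spaces.linear_compose[OF fl fl] sq] by simp
  qed
  have lv: "Vector_Spaces.linear (*s) (*s) v"
    using lu unfolding v_def Vector_Spaces.linear_iff
    by (auto simp: uadd lin_add[OF lw] lin_scale[OF lw] algebra_simps)
  let ?e = "\<lambda>i. axis i (1::'k) :: 'k^'n"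
  have "(\<Sum>i\<in>UNIV. v (v (?e i)) $ i) = (\<Sum>i\<in>UNIV. u (u (?e i)) $ i) + (\<Sum>i\<in>UNIV. u (w (?e i)) $ i)
      + (\<Sum>i\<in>UNIV. w (u (?e i)) $ i) + (\<Sum>i\<in>UNIV. w (w (?e i)) $ i)"
    by (simp add: v_def uadd wadd sum.distrib)
  then have T: "(\<Sum>i\<in>UNIV. u (w (?e i)) $ i) + (\<Sum>i\<in>UNIV. w (u (?e i)) $ i) = 0"
    using tr0[OF vS lv] tr0[OF uS lu] tr0[OF wS[folded w_def] lw] by simp
  have T1: "(\<Sum>i\<in>UNIV. u (w (?e i)) $ i) = b y (u x) - b x (u y)"
  proof -
    have "(\<Sum>i\<in>UNIV. u (w (?e i)) $ i) = (\<Sum>i\<in>UNIV. (u x)$i * b y (?e i)) - (\<Sum>i\<in>UNIV. (u y)$i * b x (?e i))"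
      by (simp add: w_def wedge_b_def lin_diff[OF lu] uadd sum_subtractf mult.commute)
    then show ?thesis using lin_fun_expand[OF L2, of y "u x"] lin_fun_expand[OF L2, of x "u y"] by simp
  qed
  have T2: "(\<Sum>i\<in>UNIV. w (u (?e i)) $ i) = b y (u x) - b x (u y)"
  proof -
    have lyu: "Vector_Spaces.linear (*s) (*) (\<lambda>z. b p (u z))" for p
      using Vector_Spaces.linear_compose[OF lu L2[of p]] by (simp add: o_def)
    have "(\<Sum>i\<in>UNIV. w (u (?e i)) $ i) = (\<Sum>i\<in>UNIV. x$i * b y (u (?e i))) - (\<Sum>i\<in>UNIV. y$i * b x (u (?e i)))"
      by (simp add: w_def wedge_b_def sum_subtractf mult.commute)
    then show ?thesis using lin_fun_expand[OF lyu, of y x] lin_fun_expand[OF lyu, of x y] by simp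
  qed
  have skew: "b x (u y) = - b y (u x)"
    using bu[of "x + y"] bu[of x] bu[of y] by (simp add: uadd b1 b2 add_eq_0_iff2 algebra_simps)
  have "2 * (2 * b y (u x)) = 0" using T T1 T2 skew by (simp add: algebra_simps)
  then have z: "b y (u x) = 0" using char by (simp only: mult_eq_0_iff) simp
  from symalt show ?thesis
  proof
    assume "symmetric_form b" then show ?thesis using z by (simp add: symmetric_form_def)
  next
    assume a: "alternating_form b"
    have "b (u x + y) (u x + y) = 0" using a by (simp add: alternating_form_def)
    then show ?thesis using a z by (simp add: b1 b2 alternating_form_def)
  qed
qed
end
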